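(* Let $a,b$ be a parallel pair of a regular curve $M$ such that neither $a$ nor $b$ is an inflexion point. If $M$ is curved in the different sides at $a$ and $b$, then the pair $a,b$ cannot produce an asymptote of $\mathrm{CSS}(M)$.
   Context: Two distinct points $a,b\in M$ form a parallel pair if their tangent lines are parallel. $\tau_v$ denotes translation by $v$. $M$ is curved in the same side (resp. different sides) at $a$ and $b$ if the germs of $M$ and $\tau_{a-b}(M)$ at $a=\tau_{a-b}(b)$ lie on the same side (resp. different sides) of the tangent line to $M$ at $a$. The Centre Symmetry Set $\mathrm{CSS}(M)$ is the envelope of lines through parallel pairs. A parallel pair $a,b$ produces an asymptote of $\mathrm{CSS}(M)$ if, for local arc-length parameterizations $f$ near $a=f(s)$ and $g$ near $b=g(t)$ chosen with $f'(s)=-g'(t)$, one has $\kappa_f(s)+\kappa_g(t)=0$ ($\kappa$ the signed curvature); then the line through $a,b$ is an asymptote of $\mathrm{CSS}(M)$. *)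

theory Defs
  imports "HOL-Analysis.Analysis"
begin

definition vel :: "(real \<Rightarrow> complex) \<Rightarrow> real \<Rightarrow> complex" where
  "vel f u = vector_derivative f (at u)"

definition acc :: "(real \<Rightarrow> complex) \<Rightarrow> real \<Rightarrow> complex" where
  "acc f u = vector_derivative (vel f) (at u)"

text \<open>Signed curvature of a (unit speed) parameterization: det(f', f'').\<close>
definition curvature :: "(real \<Rightarrow> complex) \<Rightarrow> real \<Rightarrow> real" where
  "curvature f u = Im (cnj (vel f u) * acc f u)"

definition local_arclength_param ::
  "complex set \<Rightarrow> (real \<Rightarrow> complex) \<Rightarrow> real \<Rightarrow> complex \<Rightarrow> bool" where
  "local_arclength_param M f s a \<longleftrightarrow> f s = a \<and>
     (\<exists>I U. open I \<and> is_interval I \<and> s \<in> I \<and> open U \<and> a \<in> U \<and>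
        inj_on f I \<and> f ` I = M \<inter> U \<and>
        (\<forall>u\<in>I. (f has_vector_derivative vel f u) (at u) \<and>
                 (vel f has_vector_derivative acc f u) (at u) \<and>
                 norm (vel f u) = 1) \<and>
        continuous_on I (acc f))"

definition regular_curve :: "complex set \<Rightarrow> bool" where
  "regular_curve M \<longleftrightarrow> (\<forall>a\<in>M. \<exists>f s. local_arclength_param M f s a)"

definition inflexion_point :: "complex set \<Rightarrow> complex \<Rightarrow> bool" where
  "inflexion_point M a \<longleftrightarrow>
     (\<exists>f s. local_arclength_param M f s a \<and> curvature f s = 0)"

definition parallel_pair :: "complex set \<Rightarrow> complex \<Rightarrow> complex \<Rightarrow> bool" where
  "parallel_pair M a b \<longleftrightarrow> a \<in> M \<and> b \<in> M \<and> a \<noteq> b \<and>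
     (\<exists>f s g t. local_arclength_param M f s a \<and> local_arclength_param M g t b \<and>
        Im (cnj (vel f s) * vel g t) = 0)"

definition translate :: "complex \<Rightarrow> complex set \<Rightarrow> complex set" where
  "translate v M = (\<lambda>z. z + v) ` M"

text \<open>Germ of a set X at a lies strictly on the side of the tangent line at a
  indicated by the normal n (positive side if sg = 1, negative if sg = -1).\<close>
definition germ_on_side :: "complex set \<Rightarrow> complex \<Rightarrow> complex \<Rightarrow> real \<Rightarrow> bool" where
  "germ_on_side X a n sg \<longleftrightarrow>
     (\<exists>U. open U \<and> a \<in> U \<and> (\<forall>x\<in>X \<inter> U - {a}. sg * Re (cnj n * (x - a)) > 0))"

definition curved_different_sides :: "complex set \<Rightarrow> complex \<Rightarrow> complex \<Rightarrow> bool" where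
  "curved_different_sides M a b \<longleftrightarrow>
     (\<exists>f s. local_arclength_param M f s a \<and>
        (let n = \<i> * vel f s in
          (germ_on_side M a n 1 \<and> germ_on_side (translate (a - b) M) a n (-1)) \<or>
          (germ_on_side M a n (-1) \<and> germ_on_side (translate (a - b) M) a n 1)))"

definition produces_asymptote :: "complex set \<Rightarrow> complex \<Rightarrow> complex \<Rightarrow> bool" where
  "produces_asymptote M a b \<longleftrightarrow>
     (\<exists>f s g t. local_arclength_param M f s a \<and> local_arclength_param M g t b \<and>
        vel f s = - vel g t \<and> curvature f s + curvature g t = 0)"

end

theory Submission imports Defs begin

lemma deriv_lin:
  assumes "(h has_vector_derivative v) F"
  shows "((\<lambda>u. c * Re (w * (h u - p))) has_real_derivative (c * Re (w * v))) F"
proof -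
  have bl: "bounded_linear (\<lambda>z::complex. c * Re (w * z))"
    by (intro bounded_linear_const_mult bounded_linear_compose[OF bounded_linear_Re] bounded_linear_mult_right)
  have "((\<lambda>u. h u - p) has_vector_derivative v) F"
    using has_vector_derivative_diff[OF assms has_vector_derivative_const[of p]] by simp
  from bounded_linear.has_vector_derivative[OF bl this]
  show ?thesis by (simp add: has_real_derivative_iff_has_vector_derivative)
qed

lemma first_test:
  fixes \<phi> :: "real \<Rightarrow> real"
  assumes "(\<phi> has_real_derivative l) (at s)" "eventually (\<lambda>u. \<phi> s \<le> \<phi> u) (at s)"
  shows "l = 0"
proof -
  from assms(2) obtain d where d: "d > 0" "\<forall>y. y \<noteq> s \<and> dist y s < d \<longrightarrow> \<phi> s \<le> \<phi> y"
    unfolding eventually_at by blast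
  have "\<forall>y. \<bar>s - y\<bar> < d \<longrightarrow> \<phi> s \<le> \<phi> y"
    using d(2) by (metis dist_real_def abs_minus_commute order_refl)
  from DERIV_local_min[OF assms(1) d(1) this] show ?thesis .
qed

lemma second_test:
  fixes \<phi> \<phi>' :: "real \<Rightarrow> real"
  assumes "open I" "s \<in> I" "\<forall>u\<in>I. (\<phi> has_real_derivative \<phi>' u) (at u)"
    "(\<phi>' has_real_derivative c) (at s)" "eventually (\<lambda>u. \<phi> s \<le> \<phi> u) (at s)"
  shows "\<phi>' s = 0 \<and> c \<ge> 0"
proof -
  have z: "\<phi>' s = 0" using first_test assms by blast
  moreover have "c \<ge> 0"
  proof (rule ccontr)
    assume "\<not> c \<ge> 0" hence c: "c < 0" by simp
    from assms(4) have "((\<lambda>y. (\<phi>' y - \<phi>' s) / (y - s)) \<longlongrightarrow> c) (at s)"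
      by (simp add: has_field_derivative_iff)
    hence "eventually (\<lambda>y. (\<phi>' y - \<phi>' s) / (y - s) < 0) (at s)"
      using c order_tendstoD(2) by blast
    hence e1: "eventually (\<lambda>y. (\<phi>' y - \<phi>' s) / (y - s) < 0) (at_right s)"
      using eventually_at_split by blast
    have e2: "eventually (\<lambda>y. y \<in> I) (at_right s)"
      using assms(1,2) eventually_at_topological eventually_at_split by blast
    have e3: "eventually (\<lambda>y. \<phi> s \<le> \<phi> y) (at_right s)"
      using assms(5) eventually_at_split by blast
    have "eventually (\<lambda>y. (\<phi>' y - \<phi>' s) / (y - s) < 0 \<and> y \<in> I \<and> \<phi> s \<le> \<phi> y) (at_right s)"
      using e1 e2 e3 by eventually_elim blast
    then obtain b where b: "b > s" "\<forall>y>s. y < b \<longrightarrow> (\<phi>' y - \<phi>' s) / (y - s) < 0 \<and> y \<in> I \<and> \<phi> s \<le> \<phi> y"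
      unfolding eventually_at_right_field by blast
    define y where "y = (s + b) / 2"
    have y: "s < y" "y < b" using b(1) by (auto simp: y_def)
    have "\<exists>z. s < z \<and> z < y \<and> (\<phi> y - \<phi> s = (y - s) * \<phi>' z)"
    proof (rule MVT2[OF y(1)])
      fix x assume "s \<le> x" "x \<le> y"
      hence "x \<in> I" using b(2) y assms(2) by (cases "x = s") auto
      thus "DERIV \<phi> x :> \<phi>' x" using assms(3) by blast
    qed
    then obtain z where zz: "s < z" "z < y" "\<phi> y - \<phi> s = (y - s) * \<phi>' z" by blast
    have "\<phi>' z < 0" using b(2) zz y z by (auto simp: divide_less_0_iff)
    hence "\<phi> y - \<phi> s < 0" using zz(3) y(1) by (simp add: mult_pos_neg)
    moreover have "\<phi> s \<le> \<phi> y" using b(2) y by blast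
    ultimately show False by simp
  qed
  ultimately show ?thesis by simp
qed

lemma side_lemma:
  assumes P: "local_arclength_param M f s p" and G: "germ_on_side X (p + d) n sg"
    and X: "(\<lambda>z. z + d) ` M \<subseteq> X" and sg: "sg \<noteq> 0"
  shows "Re (cnj n * vel f s) = 0 \<and> sg * Re (cnj n * acc f s) \<ge> 0"
proof -
  obtain I U where fs: "f s = p" and I: "open I" "s \<in> I" "inj_on f I" "f ` I = M \<inter> U"
    and D: "\<forall>u\<in>I. (f has_vector_derivative vel f u) (at u) \<and> (vel f has_vector_derivative acc f u) (at u) \<and> norm (vel f u) = 1"
    using P unfolding local_arclength_param_def by metis
  obtain V where V: "open V" "p + d \<in> V" "\<forall>x\<in>X \<inter> V - {p+d}. sg * Re (cnj n * (x - (p+d))) > 0"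
    using G unfolding germ_on_side_def by blast
  define \<phi> where "\<phi> u = sg * Re (cnj n * (f u - p))" for u
  define \<phi>' where "\<phi>' u = sg * Re (cnj n * vel f u)" for u
  have d1: "\<forall>u\<in>I. (\<phi> has_real_derivative \<phi>' u) (at u)"
    using D deriv_lin unfolding \<phi>_def \<phi>'_def by blast
  have d2: "(\<phi>' has_real_derivative sg * Re (cnj n * acc f s)) (at s)"
    unfolding \<phi>'_def using deriv_lin[of "vel f" "acc f s" "at s" sg "cnj n" 0] D I(2) by simp
  have ev: "eventually (\<lambda>u. \<phi> s \<le> \<phi> u) (at s)"
  proof -
    have "continuous (at s) (\<lambda>u. f u + d)"
      using D I(2) has_vector_derivative_continuous continuous_add continuous_const by blast
    hence "((\<lambda>u. f u + d) \<longlongrightarrow> p + d) (at s)" using fs by (simp add: continuous_at)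
    hence e1: "eventually (\<lambda>u. f u + d \<in> V) (at s)" using V(1,2) topological_tendstoD by blast
    have e2: "eventually (\<lambda>u. u \<in> I) (at s)"
      using topological_tendstoD[OF tendsto_ident_at I(1,2)] .
    have e3: "eventually (\<lambda>u. u \<noteq> s) (at s)" by (simp add: eventually_at_filter)
    show ?thesis using e1 e2 e3
    proof eventually_elim
      case (elim u)
      have "f u \<in> M" using I(4) elim by blast
      hence "f u + d \<in> X" using X by blast
      moreover have "f u \<noteq> p" using I(2,3) elim fs by (metis inj_onD)
      ultimately have "f u + d \<in> X \<inter> V - {p+d}" using elim by auto
      hence "sg * Re (cnj n * (f u + d - (p+d))) > 0" using V(3) by blast
      thus ?case by (simp add: \<phi>_def fs)
    qed
  qed
  from second_test[OF I(1,2) d1 d2 ev] sg show ?thesis by (simp add: \<phi>'_def)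
qed

lemma orth:
  assumes P: "local_arclength_param M f s p"
  shows "Re (cnj (vel f s) * acc f s) = 0 \<and> norm (vel f s) = 1"
proof -
  obtain I U where I: "open I" "s \<in> I"
    and D: "\<forall>u\<in>I. (f has_vector_derivative vel f u) (at u) \<and> (vel f has_vector_derivative acc f u) (at u) \<and> norm (vel f u) = 1"
    using P unfolding local_arclength_param_def by metis
  define T where "T = vel f s"
  have nT: "Re T ^ 2 + Im T ^ 2 = 1" using D I(2) cmod_power2[of T] by (simp add: T_def)
  define \<phi> where "\<phi> u = (-1) * Re (cnj T * (vel f u - 0))" for u
  have d: "(\<phi> has_real_derivative (-1) * Re (cnj T * acc f s)) (at s)"
    unfolding \<phi>_def by (rule deriv_lin) (use D I(2) in blast)
  have "eventually (\<lambda>u. u \<in> I) (at s)"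
    using topological_tendstoD[OF tendsto_ident_at I(1,2)] .
  hence ev: "eventually (\<lambda>u. \<phi> s \<le> \<phi> u) (at s)"
  proof eventually_elim
    case (elim u)
    define w where "w = vel f u"
    have nw: "Re w ^ 2 + Im w ^ 2 = 1" using D elim cmod_power2[of w] by (simp add: w_def)
    have "0 \<le> (Re T - Re w)^2 + (Im T - Im w)^2" by simp
    hence "Re T * Re w + Im T * Im w \<le> 1" using nT nw by (simp add: power2_diff)
    thus ?case using nT by (simp add: \<phi>_def w_def T_def[symmetric] power2_eq_square)
  qed
  from first_test[OF d ev] show ?thesis using D I(2) by (simp add: T_def)
qed

theorem lemma4p6:
  fixes M :: "complex set" and a b :: complex
  assumes "regular_curve M"
    and "parallel_pair M a b"
    and "\<not> inflexion_point M a" and "\<not> inflexion_point M b"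
    and "curved_different_sides M a b"
  shows "\<not> produces_asymptote M a b"
proof
  assume "produces_asymptote M a b"
  then obtain f s g t where Pf: "local_arclength_param M f s a" and Pg: "local_arclength_param M g t b"
    and vv: "vel f s = - vel g t" and kk: "curvature f s + curvature g t = 0"
    unfolding produces_asymptote_def by blast
  obtain f' s' where Pf': "local_arclength_param M f' s' a" and
    cd: "(germ_on_side M a (\<i> * vel f' s') 1 \<and> germ_on_side (translate (a - b) M) a (\<i> * vel f' s') (-1)) \<or>
         (germ_on_side M a (\<i> * vel f' s') (-1) \<and> germ_on_side (translate (a - b) M) a (\<i> * vel f' s') 1)"
    using assms(5) unfolding curved_different_sides_def Let_def by blast
  define n where "n = \<i> * vel f' s'"
  obtain sg :: real where sg: "sg \<noteq> 0" and G1: "germ_on_side M a n sg"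
    and G2: "germ_on_side (translate (a - b) M) a n (-sg)"
    using cd unfolding n_def by (metis neg_equal_zero one_neq_zero minus_minus)
  have nn: "Re n ^ 2 + Im n ^ 2 = 1"
    using orth[OF Pf'] cmod_power2[of "vel f' s'"] by (simp add: n_def add.commute)
  have k0: "curvature f s \<noteq> 0" using assms(3) Pf unfolding inflexion_point_def by blast
  have S1: "Re (cnj n * vel f s) = 0 \<and> sg * Re (cnj n * acc f s) \<ge> 0"
    by (rule side_lemma[OF Pf _ _ sg, of M 0]) (use G1 in auto)
  have S2: "Re (cnj n * vel g t) = 0 \<and> (-sg) * Re (cnj n * acc g t) \<ge> 0"
    by (rule side_lemma[OF Pg _ _ , of "translate (a - b) M" "a - b"]) (use G2 sg in \<open>auto simp: translate_def\<close>)
  have O1: "Re (cnj (vel f s) * acc f s) = 0 \<and> norm (vel f s) = 1" by (rule orth[OF Pf])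
  have O2: "Re (cnj (vel g t) * acc g t) = 0" using orth[OF Pg] by blast
  define x where "x = Re (vel f s)"
  define y where "y = Im (vel f s)"
  define p where "p = Re (acc f s)"
  define q where "q = Im (acc f s)"
  define p' where "p' = Re (acc g t)"
  define q' where "q' = Im (acc g t)"
  define n1 where "n1 = Re n"
  define n2 where "n2 = Im n"
  define \<kappa> where "\<kappa> = curvature f s"
  have vg: "Re (vel g t) = - x" "Im (vel g t) = - y" using vv by (simp_all add: x_def y_def)
  have xy: "x^2 + y^2 = 1" using O1 cmod_power2[of "vel f s"] by (simp add: x_def y_def)
  have h1: "x*p + y*q = 0" using O1 by (simp add: x_def y_def p_def q_def)
  have hk: "\<kappa> = x*q - y*p" by (simp add: \<kappa>_def curvature_def x_def y_def p_def q_def)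
  have h2: "x*p' + y*q' = 0" using O2 vg by (simp add: p'_def q'_def)
  have hk2: "- \<kappa> = - x*q' + y*p'" using kk vg by (simp add: \<kappa>_def curvature_def p'_def q'_def)
  have h3: "n1*x + n2*y = 0" using S1 by (simp add: n1_def n2_def x_def y_def)
  have h4: "sg * (n1*p + n2*q) \<ge> 0" using S1 by (simp add: n1_def n2_def p_def q_def)
  have h5: "(-sg) * (n1*p' + n2*q') \<ge> 0" using S2 by (simp add: n1_def n2_def p'_def q'_def)
  have n12: "n1^2 + n2^2 = 1" using nn by (simp add: n1_def n2_def)
  have e1: "n1*p + n2*q = \<kappa> * (n2*x - n1*y)" using h1 hk xy by algebra
  have e2: "n1*p' + n2*q' = \<kappa> * (n2*x - n1*y)" using h2 hk2 xy by algebra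
  have "sg * (\<kappa> * (n2*x - n1*y)) = 0" using h4 h5 e1 e2 by (smt (verit) mult_minus_left)
  hence z: "\<kappa> * (n2*x - n1*y) = 0" using sg by simp
  have "(n2*x - n1*y)^2 = 1" using h3 n12 xy by algebra
  hence "n2*x - n1*y \<noteq> 0" by auto
  hence "\<kappa> = 0" using z by simp
  thus False using k0 by (simp add: \<kappa>_def)
qed

end
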